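(* Let $K_0=0$ and let $\Omega\subset\mathbb R^d$ be a bounded convex domain with $C^1$ boundary, with inner unit normal $\nu(X)$ at $X\in\partial\Omega$. Define $$h_*(x)=\inf_{X\in\partial\Omega}\big[h_0+\lambda_0\,\nu(X)\cdot(x-X)\big],\qquad x\in\mathbb R^d$$ (equivalently, the lower envelope of all affine functions $H$ with $|\nabla H|=\lambda_0$, $H\ge h_0$ on $\Omega$ and $H(X)=h_0$ for some $X\in\partial\Omega$). Then $h_*$ (restricted to $\mathbb R^d\setminus\Omega$) is a weak solution of $\det D^2(-u)=0$ in $\{u>0\}\setminus\overline\Omega$, $u=h_0$ on $\partial\Omega$, $|\nabla u|=\lambda_0$ on $\Gamma_u$.
   Context: Setting: $d\ge 2$; $h_0>0$, $\lambda_0>0$ constants. For $u:\mathbb R^d\setminus\Omega\to\mathbb R$ let $U$ denote the function equal to $u$ off $\Omega$ and to $h_0$ on $\Omega$; $u$ is called concave if $U$ is concave on $\mathbb R^d$. Write $\{u>0\}$ for $\{U>0\}$ and $\Gamma_u=\partial\{u>0\}\setminus\overline\Omega$. For a convex function $f$ on an open set $D$, $\omega_x(f)=\{p: f(y)\ge f(x)+p\cdot(y-x)\ \forall y\in D\}$ and $\omega_E(f)=\bigcup_{x\in E}\omega_x(f)$. A concave $u$ is a weak solution (with $K_0=0$) if: (a) $|\omega_E(-u)|=0$ for every Borel $E\subset\{u>0\}\setminus\overline\Omega$ (gradient mapping of $-u$ on $\{u>0\}\setminus\overline\Omega$); (b) $u=h_0$ on $\partial\Omega$; (c) at every $x_0\in\Gamma_u$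 at which the convex set $\{u>0\}$ has a unique supporting hyperplane, with inner unit normal $\nu$, $\lim_{t\downarrow 0}u(x_0+t\nu)/t=\lambda_0$. *)

theory Defs
  imports "HOL-Analysis.Analysis"
begin

definition C1_defining ::
  "'a::euclidean_space set \<Rightarrow> 'a \<Rightarrow> 'a set \<Rightarrow> ('a \<Rightarrow> real) \<Rightarrow> ('a \<Rightarrow> 'a) \<Rightarrow> bool" where
  "C1_defining \<Omega> X V \<rho> \<rho>' \<longleftrightarrow>
     open V \<and> X \<in> V \<and>
     (\<forall>y\<in>V. (\<rho> has_derivative (\<lambda>h. \<rho>' y \<bullet> h)) (at y)) \<and>
     continuous_on V \<rho>' \<and>
     (\<forall>y\<in>V. \<rho>' y \<noteq> 0) \<and>
     \<Omega> \<inter> V = {y\<in>V. \<rho> y < 0}"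

definition C1_boundary :: "'a::euclidean_space set \<Rightarrow> bool" where
  "C1_boundary \<Omega> \<longleftrightarrow> (\<forall>X\<in>frontier \<Omega>. \<exists>V \<rho> \<rho>'. C1_defining \<Omega> X V \<rho> \<rho>')"

definition inner_unit_normal :: "'a::euclidean_space set \<Rightarrow> 'a \<Rightarrow> 'a \<Rightarrow> bool" where
  "inner_unit_normal \<Omega> X n \<longleftrightarrow>
     (\<exists>V \<rho> \<rho>'. C1_defining \<Omega> X V \<rho> \<rho>' \<and> n = - ((1 / norm (\<rho>' X)) *\<^sub>R \<rho>' X))"

definition h_star :: "'a::euclidean_space set \<Rightarrow> ('a \<Rightarrow> 'a) \<Rightarrow> real \<Rightarrow> real \<Rightarrow> 'a \<Rightarrow> real" where
  "h_star \<Omega> \<nu> h0 lam0 x = (INF X\<in>frontier \<Omega>. h0 + lam0 * (\<nu> X \<bullet> (x - X)))"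

definition ext_fun :: "'a set \<Rightarrow> real \<Rightarrow> ('a \<Rightarrow> real) \<Rightarrow> 'a \<Rightarrow> real" where
  "ext_fun \<Omega> h0 u x = (if x \<in> \<Omega> then h0 else u x)"

definition subgrad :: "'a::euclidean_space set \<Rightarrow> ('a \<Rightarrow> real) \<Rightarrow> 'a \<Rightarrow> 'a set" where
  "subgrad D f x = {p. \<forall>y\<in>D. f y \<ge> f x + p \<bullet> (y - x)}"

definition subgrad_set :: "'a::euclidean_space set \<Rightarrow> ('a \<Rightarrow> real) \<Rightarrow> 'a set \<Rightarrow> 'a set" where
  "subgrad_set D f E = (\<Union>x\<in>E. subgrad D f x)"

definition supporting_hyperplane :: "'a::euclidean_space set \<Rightarrow> 'a \<Rightarrow> 'a set \<Rightarrow> bool" where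
  "supporting_hyperplane C x0 H \<longleftrightarrow>
     (\<exists>a. a \<noteq> 0 \<and> H = {y. a \<bullet> y = a \<bullet> x0} \<and> (\<forall>y\<in>C. a \<bullet> y \<ge> a \<bullet> x0))"

definition hyperplane_inner_normal :: "'a::euclidean_space set \<Rightarrow> 'a \<Rightarrow> 'a set \<Rightarrow> 'a \<Rightarrow> bool" where
  "hyperplane_inner_normal C x0 H n \<longleftrightarrow>
     norm n = 1 \<and> H = {y. n \<bullet> y = n \<bullet> x0} \<and> (\<forall>y\<in>C. n \<bullet> (y - x0) \<ge> 0)"

definition weak_solution ::
  "'a::euclidean_space set \<Rightarrow> real \<Rightarrow> real \<Rightarrow> ('a \<Rightarrow> real) \<Rightarrow> bool" where
  "weak_solution \<Omega> h0 lam0 u \<longleftrightarrow>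
     (let U = ext_fun \<Omega> h0 u;
          P = {x. U x > 0};
          D = P - closure \<Omega>;
          \<Gamma> = frontier P - closure \<Omega>
      in concave_on UNIV U \<and>
         (\<forall>E. E \<in> sets borel \<and> E \<subseteq> D \<longrightarrow> negligible (subgrad_set D (\<lambda>x. - u x) E)) \<and>
         (\<forall>x\<in>frontier \<Omega>. u x = h0) \<and>
         (\<forall>x0\<in>\<Gamma>. \<forall>H n. (\<exists>!H'. supporting_hyperplane P x0 H') \<and>
               supporting_hyperplane P x0 H \<and> hyperplane_inner_normal P x0 H n \<longrightarrow>
               ((\<lambda>t. u (x0 + t *\<^sub>R n) / t) \<longlongrightarrow> lam0) (at_right 0)))"

end

theory Submission
  imports Defs
begin

lemma line_deriv:
  fixes \<rho> :: "'a::euclidean_space \<Rightarrow> real"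
  assumes "(\<rho> has_derivative (\<lambda>h. g \<bullet> h)) (at X)"
  shows "((\<lambda>s. \<rho> (X + s *\<^sub>R h)) has_real_derivative (g \<bullet> h)) (at 0)"
proof -
  have 1: "((\<lambda>s::real. X + s *\<^sub>R h) has_derivative (\<lambda>s. s *\<^sub>R h)) (at 0)"
    by (auto intro!: derivative_eq_intros)
  have 2: "(\<rho> has_derivative (\<lambda>k. g \<bullet> k)) (at (X + (0::real) *\<^sub>R h))" using assms by simp
  have "((\<lambda>s. \<rho> (X + s *\<^sub>R h)) has_derivative (\<lambda>s. g \<bullet> (s *\<^sub>R h))) (at 0)"
    using has_derivative_compose[OF 1 2] by simp
  then show ?thesis
    by (rule has_derivative_imp_has_field_derivative) (simp add: inner_scaleR_right)
qed

lemma C1_facts: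
  fixes \<Omega> :: "'a::euclidean_space set"
  assumes "open \<Omega>" "X \<in> frontier \<Omega>" "C1_defining \<Omega> X V \<rho> \<rho>'"
  shows "\<rho> X = 0"
    and "\<And>h. \<rho>' X \<bullet> h < 0 \<Longrightarrow> \<exists>\<epsilon>>0. \<forall>s. 0<s \<and> s<\<epsilon> \<longrightarrow> X + s *\<^sub>R h \<in> \<Omega>"
    and "\<And>h. \<rho>' X \<bullet> h > 0 \<Longrightarrow> \<exists>\<epsilon>>0. \<forall>s. 0<s \<and> s<\<epsilon> \<longrightarrow> X + s *\<^sub>R h \<notin> \<Omega>"
proof -
  have V: "open V" "X \<in> V" and der: "\<And>y. y\<in>V \<Longrightarrow> (\<rho> has_derivative (\<lambda>h. \<rho>' y \<bullet> h)) (at y)"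
    and eq: "\<Omega> \<inter> V = {y\<in>V. \<rho> y < 0}"
    using assms(3) unfolding C1_defining_def by auto
  have XnO: "X \<notin> \<Omega>" using assms(1,2) by (simp add: frontier_def interior_open)
  have XcO: "X \<in> closure \<Omega>" using assms(2) by (simp add: frontier_def)
  have ge: "\<rho> X \<ge> 0" proof (rule ccontr) assume "\<not> 0 \<le> \<rho> X" then have "X \<in> \<Omega> \<inter> V" using eq V by auto thus False using XnO by auto qed
  have le: "\<rho> X \<le> 0"
  proof (rule ccontr)
    assume "\<not> \<rho> X \<le> 0"
    hence pos: "\<rho> X > 0" by simp
    have "isCont \<rho> X" using der[OF V(2)] has_derivative_continuous by blast
    hence "(\<rho> \<longlongrightarrow> \<rho> X) (at X)" by (simp add: isCont_def)
    hence ev1: "eventually (\<lambda>y. 0 < \<rho> y) (at X)" using pos order_tendstoD(1) by blast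
    have ev2: "eventually (\<lambda>y. y \<in> V) (at X)" using V eventually_at_topological by blast
    have "eventually (\<lambda>y. 0 < \<rho> y \<and> y \<in> V) (at X)" using ev1 ev2 eventually_conj by blast
    then obtain d where d: "d > 0" "\<And>y. y \<noteq> X \<Longrightarrow> dist y X < d \<Longrightarrow> 0 < \<rho> y \<and> y \<in> V"
      unfolding eventually_at by blast
    obtain y where y: "y \<in> \<Omega>" "dist y X < d" using XcO d(1) closure_approachable by blast
    have "y \<noteq> X" using y XnO by auto
    with d y have "0 < \<rho> y" "y \<in> V" by auto
    hence "y \<in> \<Omega> \<inter> V" using y by auto
    with eq \<open>0 < \<rho> y\<close> show False by auto
  qed
  show r0: "\<rho> X = 0" using ge le by simp
  obtain e where e: "e > 0" "ball X e \<subseteq> V" using V openE by blast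
  have inV: "X + s *\<^sub>R h \<in> V" if "0 < s" "s < e / (norm h + 1)" for s h
  proof -
    have "s * norm h \<le> s * (norm h + 1)" using that by simp
    also have "\<dots> < e" proof -
      have "norm h + 1 > 0" by (smt (verit) norm_ge_zero)
      thus ?thesis using that(2) pos_less_divide_eq by blast
    qed
    finally have "dist X (X + s *\<^sub>R h) < e" using that by (simp add: dist_norm)
    thus ?thesis using e by auto
  qed
  have epos: "e / (norm h + 1) > 0" for h :: 'a using e by (smt (verit) divide_pos_pos norm_ge_zero)
  show "\<exists>\<epsilon>>0. \<forall>s. 0<s \<and> s<\<epsilon> \<longrightarrow> X + s *\<^sub>R h \<in> \<Omega>" if neg: "\<rho>' X \<bullet> h < 0" for h
  proof -
    obtain d where d: "d > 0" "\<And>s. s > 0 \<Longrightarrow> s < d \<Longrightarrow> \<rho> (X + 0 *\<^sub>R h) > \<rho> (X + (0 + s) *\<^sub>R h)"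
      using DERIV_neg_dec_right[OF line_deriv[OF der[OF V(2)], of h] neg] by blast
    show ?thesis
    proof (intro exI[of _ "min d (e / (norm h + 1))"] conjI allI impI)
      show "0 < min d (e / (norm h + 1))" using d epos by simp
      fix s assume s: "0 < s \<and> s < min d (e / (norm h + 1))"
      hence "\<rho> (X + s *\<^sub>R h) < 0" using d(2)[of s] r0 by simp
      moreover have "X + s *\<^sub>R h \<in> V" using inV s by simp
      ultimately show "X + s *\<^sub>R h \<in> \<Omega>" using eq by blast
    qed
  qed
  show "\<exists>\<epsilon>>0. \<forall>s. 0<s \<and> s<\<epsilon> \<longrightarrow> X + s *\<^sub>R h \<notin> \<Omega>" if pos: "\<rho>' X \<bullet> h > 0" for h
  proof -
    obtain d where d: "d > 0" "\<And>s. s > 0 \<Longrightarrow> s < d \<Longrightarrow> \<rho> (X + 0 *\<^sub>R h) < \<rho> (X + (0 + s) *\<^sub>R h)"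
      using DERIV_pos_inc_right[OF line_deriv[OF der[OF V(2)], of h] pos] by blast
    show ?thesis
    proof (intro exI[of _ "min d (e / (norm h + 1))"] conjI allI impI)
      show "0 < min d (e / (norm h + 1))" using d epos by simp
      fix s assume s: "0 < s \<and> s < min d (e / (norm h + 1))"
      hence "\<rho> (X + s *\<^sub>R h) > 0" using d(2)[of s] r0 by simp
      moreover have "X + s *\<^sub>R h \<in> V" using inV s by simp
      ultimately show "X + s *\<^sub>R h \<notin> \<Omega>"
      proof (intro notI)
        assume "0 < \<rho> (X + s *\<^sub>R h)" "X + s *\<^sub>R h \<in> V" "X + s *\<^sub>R h \<in> \<Omega>"
        hence "X + s *\<^sub>R h \<in> \<Omega> \<inter> V" by auto
        hence "\<rho> (X + s *\<^sub>R h) < 0" using eq by auto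
        thus False using \<open>0 < \<rho> (X + s *\<^sub>R h)\<close> by simp
      qed
    qed
  qed
qed


lemma normal_facts:
  fixes \<Omega> :: "'a::euclidean_space set"
  assumes op: "open \<Omega>" and cv: "convex \<Omega>" and X: "X \<in> frontier \<Omega>" and nu: "inner_unit_normal \<Omega> X n"
  shows "norm n = 1" and "\<And>y. y \<in> closure \<Omega> \<Longrightarrow> n \<bullet> (y - X) \<ge> 0"
    and "\<And>a. a \<noteq> 0 \<Longrightarrow> (\<forall>y\<in>\<Omega>. a \<bullet> (y - X) \<ge> 0) \<Longrightarrow> n = (1/norm a) *\<^sub>R a"
proof -
  obtain V \<rho> \<rho>' where D: "C1_defining \<Omega> X V \<rho> \<rho>'" and n: "n = - ((1 / norm (\<rho>' X)) *\<^sub>R \<rho>' X)"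
    using nu unfolding inner_unit_normal_def by blast
  define g where "g = \<rho>' X"
  have g0: "g \<noteq> 0" using D unfolding C1_defining_def g_def by auto
  have ng: "norm g > 0" using g0 by simp
  have n': "n = - ((1 / norm g) *\<^sub>R g)" using n g_def by simp
  show "norm n = 1" using n' g0 by simp
  have ninner: "n \<bullet> w = - (g \<bullet> w) / norm g" for w using n' by (simp add: inner_scaleR_left)
  have XnO: "X \<notin> \<Omega>" using op X by (simp add: frontier_def interior_open)
  have XcO: "X \<in> closure \<Omega>" using X by (simp add: frontier_def)
  have inO: "n \<bullet> (y - X) \<ge> 0" if y: "y \<in> \<Omega>" for y
  proof (rule ccontr)
    assume "\<not> n \<bullet> (y - X) \<ge> 0"
    hence "g \<bullet> (y - X) > 0" using ninner[of "y - X"] ng by (smt (verit) divide_nonneg_pos)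
    then obtain \<epsilon> where e: "\<epsilon> > 0" "\<And>s. 0 < s \<Longrightarrow> s < \<epsilon> \<Longrightarrow> X + s *\<^sub>R (y - X) \<notin> \<Omega>"
      using C1_facts(3)[OF op X D, of "y - X"] g_def by blast
    define s where "s = min (\<epsilon>/2) (1/2)"
    have s: "0 < s" "s < \<epsilon>" "s < 1" using e(1) by (auto simp: s_def)
    have "X + s *\<^sub>R (y - X) \<in> open_segment y X"
      unfolding in_segment using s XnO y
      by (intro conjI exI[of _ "1 - s"]) (auto simp: algebra_simps)
    moreover have "open_segment y X \<subseteq> interior \<Omega>"
      using in_interior_closure_convex_segment[OF cv _ XcO, of y] y op by (simp add: interior_open)
    ultimately have "X + s *\<^sub>R (y - X) \<in> \<Omega>" using op by (auto simp: interior_open)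
    thus False using e(2) s by blast
  qed
  show "n \<bullet> (y - X) \<ge> 0" if "y \<in> closure \<Omega>" for y
  proof -
    have "\<Omega> \<subseteq> {y. n \<bullet> y \<ge> n \<bullet> X}" using inO by (auto simp: inner_diff_right)
    hence "closure \<Omega> \<subseteq> {y. n \<bullet> y \<ge> n \<bullet> X}" by (rule closure_minimal) (rule closed_halfspace_ge)
    thus ?thesis using that by (auto simp: inner_diff_right)
  qed
  show "n = (1/norm a) *\<^sub>R a" if a0: "a \<noteq> 0" and sup: "\<forall>y\<in>\<Omega>. a \<bullet> (y - X) \<ge> 0" for a
  proof -
    have key: "a \<bullet> h \<ge> 0" if gh: "g \<bullet> h < 0" for h
    proof -
      obtain \<epsilon> where e: "\<epsilon> > 0" "\<And>s. 0 < s \<and> s < \<epsilon> \<Longrightarrow> X + s *\<^sub>R h \<in> \<Omega>"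
        using C1_facts(2)[OF op X D, of h] gh g_def by blast
      have "X + (\<epsilon>/2) *\<^sub>R h \<in> \<Omega>" using e by simp
      hence "a \<bullet> ((\<epsilon>/2) *\<^sub>R h) \<ge> 0" using sup by force
      thus ?thesis using e(1) by (simp add: inner_scaleR_right zero_le_mult_iff)
    qed
    define ah where "ah = (1/norm a) *\<^sub>R a"
    define gh where "gh = (1/norm g) *\<^sub>R g"
    have nah: "norm ah = 1" "ah \<bullet> ah = 1" using a0 by (auto simp: ah_def dot_square_norm)
    have ngh: "norm gh = 1" "gh \<bullet> gh = 1" using g0 by (auto simp: gh_def dot_square_norm)
    define c where "c = ah \<bullet> gh"
    have sq: "(ah + gh) \<bullet> (ah + gh) = 2 + 2 * c"
      using nah ngh by (simp add: c_def inner_add_left inner_add_right inner_commute)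
    have "(ah + gh) \<bullet> (ah + gh) = 0"
    proof (rule ccontr)
      assume ne: "(ah + gh) \<bullet> (ah + gh) \<noteq> 0"
      hence cpos: "1 + c > 0" using sq inner_ge_zero[of "ah + gh"] by linarith
      define h where "h = - (ah + gh)"
      have "g \<bullet> h = - norm g * (c + 1)"
        using ngh g0 by (simp add: h_def gh_def c_def ah_def inner_add_right inner_commute inner_scaleR_left inner_scaleR_right dot_square_norm power2_eq_square algebra_simps)
      hence "g \<bullet> h < 0" using cpos ng by (simp add: mult_pos_pos)
      moreover have "a \<bullet> h = - norm a * (1 + c)"
        using nah a0 by (simp add: h_def gh_def c_def ah_def inner_add_right inner_commute inner_scaleR_left inner_scaleR_right dot_square_norm power2_eq_square algebra_simps)
      hence "a \<bullet> h < 0" using cpos a0 by (simp add: mult_pos_pos)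
      ultimately show False using key by fastforce
    qed
    hence "ah + gh = 0" by simp
    hence "ah = - gh" by (simp add: add_eq_0_iff)
    thus ?thesis using n' by (simp add: ah_def gh_def)
  qed
qed


lemma hstar_formula:
  fixes \<Omega> :: "'a::euclidean_space set"
  assumes op: "open \<Omega>" and cv: "convex \<Omega>" and ne: "\<Omega> \<noteq> {}" and bd: "bounded \<Omega>"
    and lam: "lam0 > 0"
    and nu: "\<forall>X\<in>frontier \<Omega>. inner_unit_normal \<Omega> X (\<nu> X)"
    and x: "x \<notin> \<Omega>"
  shows "h_star \<Omega> \<nu> h0 lam0 x = h0 - lam0 * infdist x (closure \<Omega>)"
proof -
  let ?C = "closure \<Omega>"
  let ?F = "frontier \<Omega>"
  let ?t = "\<lambda>X. h0 + lam0 * (\<nu> X \<bullet> (x - X))"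
  have Cne: "?C \<noteq> {}" using ne by simp
  have Ccl: "closed ?C" by simp
  have Fne: "?F \<noteq> {}"
  proof
    assume "?F = {}"
    hence "\<Omega> = UNIV" using ne frontier_eq_empty by blast
    thus False using bd not_bounded_UNIV by auto
  qed
  obtain q where q: "q \<in> ?C" "infdist x ?C = dist x q"
    using infdist_attains_inf[OF Ccl Cne] by blast
  have lower: "?t X \<ge> h0 - lam0 * infdist x ?C" if X: "X \<in> ?F" for X
  proof -
    have nX: "norm (\<nu> X) = 1" "\<And>y. y \<in> ?C \<Longrightarrow> \<nu> X \<bullet> (y - X) \<ge> 0"
      using normal_facts(1,2)[OF op cv X] nu X by auto
    have "\<nu> X \<bullet> (x - X) = \<nu> X \<bullet> (x - q) + \<nu> X \<bullet> (q - X)" by (simp add: inner_diff_right)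
    moreover have "\<nu> X \<bullet> (x - q) \<ge> - norm (x - q)"
      using Cauchy_Schwarz_ineq2[of "\<nu> X" "x - q"] nX(1) by (simp add: abs_le_iff)
    moreover have "\<nu> X \<bullet> (q - X) \<ge> 0" using nX(2) q(1) by simp
    ultimately have "\<nu> X \<bullet> (x - X) \<ge> - infdist x ?C" using q(2) by (simp add: dist_norm)
    hence "lam0 * (\<nu> X \<bullet> (x - X)) \<ge> lam0 * (- infdist x ?C)" using lam by (intro mult_left_mono) auto
    thus ?thesis by simp
  qed
  have bdd: "bdd_below (?t ` ?F)" by (rule bdd_belowI2[where m = "h0 - lam0 * infdist x ?C"]) (use lower in blast)
  obtain X0 where X0: "X0 \<in> ?F" "?t X0 \<le> h0 - lam0 * infdist x ?C"
  proof (cases "x \<in> ?C")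
    case True
    hence "x \<in> ?F" using x op by (simp add: frontier_def interior_open)
    moreover have "infdist x ?C = 0" using True by simp
    ultimately show ?thesis using that[of x] by simp
  next
    case False
    have qx: "q \<noteq> x" using q False by auto
    have qnO: "q \<notin> \<Omega>"
    proof
      assume "q \<in> \<Omega>"
      then obtain e where e: "e > 0" "ball q e \<subseteq> \<Omega>" using op openE by blast
      define r where "r = norm (x - q)"
      have r: "r > 0" using qx by (simp add: r_def)
      define s where "s = min (e/2) (r/2)"
      have s: "s > 0" "s < e" "s < r" using e r by (auto simp: s_def)
      define q' where "q' = q + (s / r) *\<^sub>R (x - q)"
      have "dist q q' = s" using r s by (simp add: q'_def dist_norm r_def)
      hence "q' \<in> \<Omega>" using e s by auto
      hence i1: "infdist x ?C \<le> dist x q'" by (simp add: infdist_le closure_subset[THEN subsetD])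
      have "x - q' = (1 - s/r) *\<^sub>R (x - q)" by (simp add: q'_def algebra_simps)
      hence "dist x q' = \<bar>1 - s/r\<bar> * r" by (simp add: dist_norm r_def)
      also have "\<bar>1 - s/r\<bar> = 1 - s/r" using r s by simp
      also have "(1 - s/r) * r = r - s" using r by (simp add: algebra_simps)
      finally have "dist x q' = r - s" .
      with i1 have "infdist x ?C \<le> r - s" by simp
      thus False using q(2) s by (simp add: dist_norm r_def norm_minus_commute)
    qed
    have qF: "q \<in> ?F" using q(1) qnO op by (simp add: frontier_def interior_open)
    have clos: "\<forall>z\<in>?C. dist x q \<le> dist x z" using q(2) infdist_le by metis
    define a where "a = q - x"
    have a0: "a \<noteq> 0" using qx by (simp add: a_def)
    have sup: "\<forall>y\<in>\<Omega>. a \<bullet> (y - q) \<ge> 0"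
    proof
      fix y assume "y \<in> \<Omega>"
      hence "(x - q) \<bullet> (y - q) \<le> 0"
        using any_closest_point_dot[OF convex_closure[OF cv] Ccl q(1) _ clos] closure_subset by blast
      thus "a \<bullet> (y - q) \<ge> 0" by (simp add: a_def inner_diff_left)
    qed
    have nq: "\<nu> q = (1/norm a) *\<^sub>R a" using normal_facts(3)[OF op cv qF _ a0 sup] nu qF by auto
    have "x - q = - a" by (simp add: a_def)
    hence "\<nu> q \<bullet> (x - q) = - ((a \<bullet> a) / norm a)" by (simp add: nq inner_scaleR_left)
    also have "a \<bullet> a = norm a * norm a" by (simp add: dot_square_norm power2_eq_square)
    finally have "\<nu> q \<bullet> (x - q) = - norm a" using a0 by simp
    hence "?t q = h0 - lam0 * infdist x ?C" using q(2) by (simp add: a_def dist_norm norm_minus_commute)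
    thus ?thesis using that qF by simp
  qed
  have "h_star \<Omega> \<nu> h0 lam0 x \<le> h0 - lam0 * infdist x ?C"
    unfolding h_star_def using cINF_lower[OF bdd X0(1)] X0(2) by linarith
  moreover have "h_star \<Omega> \<nu> h0 lam0 x \<ge> h0 - lam0 * infdist x ?C"
    unfolding h_star_def using Fne lower by (intro cINF_greatest) auto
  ultimately show ?thesis by linarith
qed


lemma grad_part:
  fixes C :: "'a::euclidean_space set"
  assumes Ccl: "closed C" and Cne: "C \<noteq> {}" and lam: "lam0 > 0" and Dop: "open D"
    and DC: "D \<inter> C = {}" and x: "x \<in> D"
    and hsD: "\<forall>y\<in>D. u y = h0 - lam0 * infdist y C"
    and p: "\<forall>y\<in>D. - u y \<ge> - u x + p \<bullet> (y - x)"
  shows "norm p = lam0"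
proof -
  obtain q where q: "q \<in> C" "infdist x C = dist x q" using infdist_attains_inf[OF Ccl Cne] by blast
  define a where "a = x - q"
  have xq: "x \<noteq> q" using x q DC by auto
  have a0: "a \<noteq> 0" using xq by (simp add: a_def)
  define r where "r = norm a"
  have r: "r > 0" using a0 by (simp add: r_def)
  obtain e where e: "e > 0" "ball x e \<subseteq> D" using Dop x openE by blast
  have eq: "p \<bullet> v = lam0 * (sgn a \<bullet> v)" for v
  proof -
    define f where "f t = lam0 * norm (a + t *\<^sub>R v) - t * (p \<bullet> v)" for t
    have nd: "(norm has_derivative (\<lambda>h. sgn a \<bullet> h)) (at a)"
      using has_derivative_norm[OF a0] by (simp add: inner_commute)
    have d1: "((\<lambda>s. norm (a + s *\<^sub>R v)) has_real_derivative (sgn a \<bullet> v)) (at 0)"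
      using line_deriv[OF nd] .
    have d2: "((\<lambda>t. t * (p \<bullet> v)) has_real_derivative (p \<bullet> v)) (at 0)"
      by (auto intro!: derivative_eq_intros)
    have "(f has_real_derivative (lam0 * (sgn a \<bullet> v) - (p \<bullet> v))) (at 0)"
      unfolding f_def by (rule DERIV_diff[OF DERIV_cmult[OF d1] d2])
    moreover have dpos: "e / (norm v + 1) > 0" using e by (smt (verit) divide_pos_pos norm_ge_zero)
    moreover have "\<forall>t. \<bar>0 - t\<bar> < e / (norm v + 1) \<longrightarrow> f 0 \<le> f t"
    proof (intro allI impI)
      fix t assume t: "\<bar>0 - t\<bar> < e / (norm v + 1)"
      have "norm v + 1 > 0" by (smt (verit) norm_ge_zero)
      hence "\<bar>t\<bar> * (norm v + 1) < e" using t pos_less_divide_eq by force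
      hence "\<bar>t\<bar> * norm v < e" by (smt (verit) abs_ge_zero mult_left_mono)
      hence "dist x (x + t *\<^sub>R v) < e" by (simp add: dist_norm)
      hence yD: "x + t *\<^sub>R v \<in> D" using e by auto
      have "- u (x + t *\<^sub>R v) \<ge> - u x + p \<bullet> (t *\<^sub>R v)" using p yD by auto
      hence "lam0 * infdist (x + t *\<^sub>R v) C \<ge> lam0 * infdist x C + t * (p \<bullet> v)"
        using hsD yD x by (simp add: inner_scaleR_right)
      moreover have "infdist (x + t *\<^sub>R v) C \<le> norm (a + t *\<^sub>R v)"
        using infdist_le[OF q(1), of "x + t *\<^sub>R v"] by (simp add: dist_norm a_def algebra_simps)
      moreover have "infdist x C = norm a" using q(2) by (simp add: dist_norm a_def)
      ultimately have "lam0 * norm a + t * (p \<bullet> v) \<le> lam0 * norm (a + t *\<^sub>R v)"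
        using lam by (smt (verit) mult_left_mono)
      thus "f 0 \<le> f t" by (simp add: f_def)
    qed
    ultimately have "lam0 * (sgn a \<bullet> v) - (p \<bullet> v) = 0" by (rule DERIV_local_min)
    thus ?thesis by simp
  qed
  define w where "w = p - (lam0 / r) *\<^sub>R a"
  have sgn: "sgn a = (1 / r) *\<^sub>R a" by (simp add: sgn_div_norm r_def divide_inverse_commute)
  have "p \<bullet> w = (lam0 / r) * (a \<bullet> w)" using eq[of w] by (simp add: sgn inner_scaleR_left)
  hence "w \<bullet> w = 0" by (simp add: w_def inner_diff_left inner_scaleR_left)
  hence "p = (lam0 / r) *\<^sub>R a" by (simp add: w_def)
  thus ?thesis using r lam by (simp add: r_def)
qed

lemma c_part:
  fixes C :: "'a::euclidean_space set"
  assumes Ccl: "closed C" and Cne: "C \<noteq> {}" and lam: "lam0 > 0" and h0: "h0 > 0"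
    and x0: "lam0 * infdist x0 C = h0"
    and hs: "\<forall>y. infdist y C > 0 \<longrightarrow> u y = h0 - lam0 * infdist y C"
    and n1: "norm n = 1" and nsup: "\<forall>y. 0 < h0 - lam0 * infdist y C \<longrightarrow> n \<bullet> (y - x0) \<ge> 0"
  shows "((\<lambda>t. u (x0 + t *\<^sub>R n) / t) \<longlongrightarrow> lam0) (at_right 0)"
proof -
  obtain q where q: "q \<in> C" "infdist x0 C = dist x0 q" using infdist_attains_inf[OF Ccl Cne] by blast
  define c where "c = infdist x0 C"
  have c: "c > 0" "lam0 * c = h0" using x0 h0 lam by (auto simp: c_def) (smt (verit) mult_nonneg_nonpos infdist_nonneg)
  define w where "w = q - x0"
  have nw: "norm w = c" using q(2) by (simp add: c_def w_def dist_norm norm_minus_commute)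
  have ge: "n \<bullet> w \<ge> s" if s: "0 \<le> s" "s < c" for s
  proof -
    have "infdist (q - s *\<^sub>R n) C \<le> s"
      using infdist_le[OF q(1), of "q - s *\<^sub>R n"] s n1 by (simp add: dist_norm)
    hence "0 < h0 - lam0 * infdist (q - s *\<^sub>R n) C"
      using c s lam by (smt (verit) mult_strict_left_mono)
    hence "n \<bullet> (q - s *\<^sub>R n - x0) \<ge> 0" using nsup by blast
    moreover have "n \<bullet> n = 1" using n1 by (simp add: dot_square_norm)
    ultimately show ?thesis by (simp add: w_def inner_diff_right inner_scaleR_right algebra_simps)
  qed
  have nwc: "n \<bullet> w \<ge> c"
  proof (rule ccontr)
    assume "\<not> n \<bullet> w \<ge> c"
    hence lt: "n \<bullet> w < c" by simp
    define s where "s = (max 0 (n \<bullet> w) + c) / 2"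
    have "0 \<le> s" "s < c" "n \<bullet> w < s" using lt c by (auto simp: s_def)
    thus False using ge by fastforce
  qed
  have ww: "w \<bullet> w = c * c" using nw by (simp add: dot_square_norm power2_eq_square)
  have nn: "n \<bullet> n = 1" using n1 by (simp add: dot_square_norm)
  have "(w - c *\<^sub>R n) \<bullet> (w - c *\<^sub>R n) = w \<bullet> w - 2 * c * (n \<bullet> w) + c * c * (n \<bullet> n)"
    by (simp add: inner_diff_left inner_diff_right inner_scaleR_left inner_scaleR_right inner_commute algebra_simps)
  also have "\<dots> = c * c - 2 * c * (n \<bullet> w) + c * c" using ww nn by simp
  also have "\<dots> \<le> 0"
  proof -
    have "c * c \<le> c * (n \<bullet> w)" using nwc c by (intro mult_left_mono) auto
    thus ?thesis by linarith
  qed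
  finally have "(w - c *\<^sub>R n) \<bullet> (w - c *\<^sub>R n) \<le> 0" .
  hence "(w - c *\<^sub>R n) \<bullet> (w - c *\<^sub>R n) = 0" using inner_ge_zero[of "w - c *\<^sub>R n"] by linarith
  hence "w - c *\<^sub>R n = 0" by simp
  hence "w = c *\<^sub>R n" by simp
  hence qx: "q = x0 + c *\<^sub>R n" by (simp add: w_def algebra_simps)
  have val: "u (x0 + t *\<^sub>R n) / t = lam0" if t: "0 < t" "t < c" for t
  proof -
    let ?y = "x0 + t *\<^sub>R n"
    have "infdist ?y C \<le> dist ?y q" using infdist_le[OF q(1)] by blast
    also have "dist ?y q = norm ((t - c) *\<^sub>R n)" by (simp add: qx dist_norm scaleR_diff_left)
    also have "\<dots> = c - t" using t n1 by simp
    finally have le: "infdist ?y C \<le> c - t" .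
    have "c \<le> infdist ?y C + dist x0 ?y" using infdist_triangle[of x0 C ?y] by (simp add: c_def)
    moreover have "dist x0 ?y = t" using t n1 by (simp add: dist_norm)
    ultimately have "infdist ?y C = c - t" using le by simp
    hence "u ?y = h0 - lam0 * (c - t)" using hs t by simp
    also have "\<dots> = lam0 * t" using c by (simp add: algebra_simps)
    finally show ?thesis using t by simp
  qed
  have "eventually (\<lambda>t. t \<in> {0<..<c}) (at_right 0)" using eventually_at_right_real c by blast
  hence "eventually (\<lambda>t. u (x0 + t *\<^sub>R n) / t = lam0) (at_right 0)"
    by (rule eventually_mono) (use val in auto)
  thus ?thesis by (rule tendsto_eventually)
qed


theorem proposition2p2:
  fixes \<Omega> :: "'a::euclidean_space set" and \<nu> :: "'a \<Rightarrow> 'a" and h0 lam0 :: real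
  assumes "DIM('a) \<ge> 2"
    and "h0 > 0" and "lam0 > 0"
    and "open \<Omega>" and "connected \<Omega>" and "\<Omega> \<noteq> {}" and "bounded \<Omega>" and "convex \<Omega>"
    and "C1_boundary \<Omega>"
    and "\<forall>X\<in>frontier \<Omega>. inner_unit_normal \<Omega> X (\<nu> X)"
  shows "weak_solution \<Omega> h0 lam0 (h_star \<Omega> \<nu> h0 lam0)"
proof -
  let ?C = "closure \<Omega>"
  define u where "u = h_star \<Omega> \<nu> h0 lam0"
  have op: "open \<Omega>" and lam: "lam0 > 0" and h0: "h0 > 0" using assms by auto
  have hs: "\<And>x. x \<notin> \<Omega> \<Longrightarrow> u x = h0 - lam0 * infdist x ?C"
    unfolding u_def using hstar_formula[OF assms(4) assms(8) assms(6) assms(7) assms(3) assms(10)] by blast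
  have Ccl: "closed ?C" by simp
  have Cne: "?C \<noteq> {}" using assms(6) by simp
  have Ccv: "convex ?C" using assms(8) by simp
  have inC0: "\<And>x. x \<in> ?C \<Longrightarrow> infdist x ?C = 0" by simp
  have hs': "\<And>y. infdist y ?C > 0 \<Longrightarrow> u y = h0 - lam0 * infdist y ?C"
  proof -
    fix y assume "infdist y ?C > 0"
    hence "y \<notin> ?C" using inC0 by force
    hence "y \<notin> \<Omega>" using closure_subset by blast
    thus "u y = h0 - lam0 * infdist y ?C" by (rule hs)
  qed
  have Ueq: "ext_fun \<Omega> h0 u = (\<lambda>x. h0 - lam0 * infdist x ?C)"
  proof
    fix x show "ext_fun \<Omega> h0 u x = h0 - lam0 * infdist x ?C"
    proof (cases "x \<in> \<Omega>")
      case True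
      hence "x \<in> ?C" using closure_subset by blast
      thus ?thesis using True by (simp add: ext_fun_def)
    next
      case False thus ?thesis using hs by (simp add: ext_fun_def)
    qed
  qed
  have cont: "continuous_on UNIV (\<lambda>x. h0 - lam0 * infdist x ?C)"
    by (intro continuous_intros)
  define P where "P = {x. 0 < h0 - lam0 * infdist x ?C}"
  have Pop: "open P" unfolding P_def by (rule open_Collect_less[OF continuous_on_const cont])
  have dconv: "infdist (a *\<^sub>R x + b *\<^sub>R y) ?C \<le> a * infdist x ?C + b * infdist y ?C"
    if ab: "a \<ge> 0" "b \<ge> 0" "a + b = 1" for a b x y
  proof -
    obtain qx where qx: "qx \<in> ?C" "infdist x ?C = dist x qx" using infdist_attains_inf[OF Ccl Cne] by blast
    obtain qy where qy: "qy \<in> ?C" "infdist y ?C = dist y qy" using infdist_attains_inf[OF Ccl Cne] by blast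
    have z: "a *\<^sub>R qx + b *\<^sub>R qy \<in> ?C" using convexD[OF Ccv qx(1) qy(1) ab] .
    have "infdist (a *\<^sub>R x + b *\<^sub>R y) ?C \<le> dist (a *\<^sub>R x + b *\<^sub>R y) (a *\<^sub>R qx + b *\<^sub>R qy)"
      by (rule infdist_le[OF z])
    also have "\<dots> = norm (a *\<^sub>R (x - qx) + b *\<^sub>R (y - qy))"
      by (simp add: dist_norm scaleR_diff_right algebra_simps)
    also have "\<dots> \<le> norm (a *\<^sub>R (x - qx)) + norm (b *\<^sub>R (y - qy))" by (rule norm_triangle_ineq)
    also have "\<dots> = a * infdist x ?C + b * infdist y ?C" using ab qx qy by (simp add: dist_norm)
    finally show ?thesis .
  qed
  have concave: "concave_on UNIV (\<lambda>x. h0 - lam0 * infdist x ?C)"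
    unfolding concave_on_iff
  proof (intro conjI ballI allI impI convex_UNIV)
    fix x y :: 'a and a b :: real assume ab: "0 \<le> a" "0 \<le> b" "a + b = 1"
    have "lam0 * infdist (a *\<^sub>R x + b *\<^sub>R y) ?C \<le> lam0 * (a * infdist x ?C + b * infdist y ?C)"
      using dconv[OF ab] lam by (intro mult_left_mono) auto
    moreover have "a * (h0 - lam0 * infdist x ?C) + b * (h0 - lam0 * infdist y ?C)
        = (a + b) * h0 - lam0 * (a * infdist x ?C + b * infdist y ?C)" by (simp add: algebra_simps)
    ultimately show "a * (h0 - lam0 * infdist x ?C) + b * (h0 - lam0 * infdist y ?C)
        \<le> h0 - lam0 * infdist (a *\<^sub>R x + b *\<^sub>R y) ?C" using ab(3) by simp
  qed
  have partA: "\<forall>E. E \<in> sets borel \<and> E \<subseteq> P - ?C \<longrightarrow> negligible (subgrad_set (P - ?C) (\<lambda>x. - u x) E)"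
  proof (intro allI impI)
    fix E :: "'a set" assume E: "E \<in> sets borel \<and> E \<subseteq> P - ?C"
    have "subgrad_set (P - ?C) (\<lambda>x. - u x) E \<subseteq> sphere 0 lam0"
    proof
      fix p assume "p \<in> subgrad_set (P - ?C) (\<lambda>x. - u x) E"
      then obtain x where x: "x \<in> E" and p: "\<forall>y\<in>P - ?C. - u y \<ge> - u x + p \<bullet> (y - x)"
        unfolding subgrad_set_def subgrad_def by auto
      have "norm p = lam0"
      proof (rule grad_part[OF Ccl Cne lam _ _ _ _ p])
        show "open (P - ?C)" using Pop Ccl by (rule open_Diff)
        show "(P - ?C) \<inter> ?C = {}" by blast
        show "x \<in> P - ?C" using x E by blast
        show "\<forall>y\<in>P - ?C. u y = h0 - lam0 * infdist y ?C"
          using hs closure_subset by blast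
      qed
      thus "p \<in> sphere 0 lam0" by simp
    qed
    thus "negligible (subgrad_set (P - ?C) (\<lambda>x. - u x) E)"
      by (rule negligible_subset[OF negligible_sphere])
  qed
  have partB: "\<forall>x\<in>frontier \<Omega>. u x = h0"
  proof
    fix x assume x: "x \<in> frontier \<Omega>"
    hence "x \<notin> \<Omega>" "x \<in> ?C" using op by (auto simp: frontier_def interior_open)
    thus "u x = h0" using hs by simp
  qed
  have partC: "\<forall>x0\<in>frontier P - ?C. \<forall>H n. (\<exists>!H'. supporting_hyperplane P x0 H') \<and>
               supporting_hyperplane P x0 H \<and> hyperplane_inner_normal P x0 H n \<longrightarrow>
               ((\<lambda>t. u (x0 + t *\<^sub>R n) / t) \<longlongrightarrow> lam0) (at_right 0)"
  proof (intro ballI allI impI)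
    fix x0 H n
    assume x0: "x0 \<in> frontier P - ?C"
      and hyp: "(\<exists>!H'. supporting_hyperplane P x0 H') \<and>
               supporting_hyperplane P x0 H \<and> hyperplane_inner_normal P x0 H n"
    have n1: "norm n = 1" and nsup: "\<forall>y\<in>P. n \<bullet> (y - x0) \<ge> 0"
      using hyp unfolding hyperplane_inner_normal_def by auto
    have x0P: "x0 \<notin> P" "x0 \<in> closure P" using x0 Pop by (auto simp: frontier_def interior_open)
    have "closed {x. 0 \<le> h0 - lam0 * infdist x ?C}"
      by (rule closed_Collect_le[OF continuous_on_const cont])
    moreover have "P \<subseteq> {x. 0 \<le> h0 - lam0 * infdist x ?C}" unfolding P_def by auto
    ultimately have "closure P \<subseteq> {x. 0 \<le> h0 - lam0 * infdist x ?C}" by (rule closure_minimal[rotated])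
    hence "0 \<le> h0 - lam0 * infdist x0 ?C" using x0P by auto
    moreover have "\<not> 0 < h0 - lam0 * infdist x0 ?C" using x0P unfolding P_def by auto
    ultimately have eq: "lam0 * infdist x0 ?C = h0" by linarith
    show "((\<lambda>t. u (x0 + t *\<^sub>R n) / t) \<longlongrightarrow> lam0) (at_right 0)"
    proof (rule c_part[OF Ccl Cne lam h0 eq _ n1])
      show "\<forall>y. 0 < infdist y ?C \<longrightarrow> u y = h0 - lam0 * infdist y ?C" using hs' by blast
      show "\<forall>y. 0 < h0 - lam0 * infdist y ?C \<longrightarrow> 0 \<le> n \<bullet> (y - x0)"
        using nsup unfolding P_def by blast
    qed
  qed
  show ?thesis
    unfolding weak_solution_def Let_def u_def[symmetric] Ueq P_def[symmetric]
    using concave partA partB partC by simp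
qed

end
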